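(* Let $n\ge 1$ and let $s$ be an even integer with $0\le s\le n(n-1)$. Put $$p=\left\lfloor \frac{\sqrt{4s+1}-1}{2}\right\rfloor,\qquad q=\frac{s-p(p+1)}{2}.$$ Then $q$ is an integer with $0\le q\le p$, and $T(n,s)$ is the length-$n$ sequence whose first $q$ entries equal $p+1$, whose next $p+1-q$ entries equal $p$, whose $(p+2)$-nd entry (if $n\ge p+2$) equals $q$, and all of whose remaining entries equal $0$; i.e. $T(n,s)=\langle (p+1)^{q},\,p^{\,p+1-q},\,q,\,0^{\,n-p-2}\rangle$ (when $n=p+1$, necessarily $q=0$ and the trailing entry $q$ and zeros are omitted).
   Context: Notation: $\langle a^r\rangle$ denotes $r$ consecutive copies of the value $a$ within a sequence. For integers $n\ge1$ and even $s$ with $0\le s\le n(n-1)$, define $m=\min\{k\ge 1 : s\le k(k-1)\}$ and define the integer sequence $T(n,s)$ of length $n$ recursively by: (i) if $s=0$, $T(n,s)=\langle 0^n\rangle$; (ii) if $s>0$ and $n>m$, $T(n,s)=\langle \gamma_1,\dots,\gamma_m,0^{n-m}\rangle$ where $\gamma=T(m,s)$; (iii) if $s>0$ and $n\le m$, $T(n,s)=\langle n-1,\gamma_1+1,\dots,\gamma_{n-1}+1\rangle$ where $\gamma=T(n-1,\,s-2(n-1))$. *)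

theory Defs
  imports Complex_Main
begin

definition tm :: "nat \<Rightarrow> nat" where
  "tm s = (LEAST k. k \<ge> 1 \<and> s \<le> k * (k - 1))"

text \<open>The sequence T(n,s), as a list of length n (recursion as in the paper;
  the value is only meaningful for even s with s \<le> n(n-1)).\<close>
function T :: "nat \<Rightarrow> nat \<Rightarrow> nat list" where
  "T n s =
    (if n = 0 then []
     else if s = 0 then replicate n 0
     else if n > tm s then T (tm s) s @ replicate (n - tm s) 0
     else (n - 1) # map (\<lambda>x. x + 1) (T (n - 1) (s - 2 * (n - 1))))"
  by pat_completeness auto
termination by (relation "measure fst") auto

declare T.simps[simp del]

end

theory Submission
  imports Defs
begin

definition L :: "nat \<Rightarrow> nat \<Rightarrow> nat \<Rightarrow> nat list" where
  "L n p q = replicate q (p + 1) @ replicate (p + 1 - q) p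
     @ (if n \<ge> p + 2 then [q] @ replicate (n - p - 2) 0 else [])"

lemma jmono: "(j::nat) \<le> k \<Longrightarrow> j * (j - 1) \<le> k * (k - 1)"
  by (intro mult_le_mono) auto

lemma tm_eq:
  assumes "k \<ge> 1" "s \<le> k * (k - 1)" "(k - 1) * (k - 2) < s"
  shows "tm s = k"
  unfolding tm_def
proof (rule Least_equality)
  show "1 \<le> k \<and> s \<le> k * (k - 1)" using assms by auto
next
  fix j assume j: "1 \<le> j \<and> s \<le> j * (j - 1)"
  show "k \<le> j"
  proof (rule ccontr)
    assume "\<not> k \<le> j"
    hence "j \<le> k - 1" by auto
    from jmono[OF this] have "j * (j - 1) \<le> (k - 1) * (k - 1 - 1)" by simp
    also have "k - 1 - 1 = k - 2" by simp
    finally have "j * (j - 1) \<le> (k - 1) * (k - 2)" .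
    with j assms(3) show False by auto
  qed
qed


lemma tmq0: assumes "p \<ge> 1" shows "tm (p * (p + 1)) = p + 1"
proof (rule tm_eq)
  show "p * (p + 1) \<le> (p + 1) * (p + 1 - 1)" by simp
  have "p * (p - 1) < p * (p + 1)" using assms by (intro mult_strict_left_mono) auto
  thus "(p + 1 - 1) * (p + 1 - 2) < p * (p + 1)" by simp
qed simp

lemma tmq: assumes "q \<ge> 1" "q \<le> p" shows "tm (p * (p + 1) + 2 * q) = p + 2"
proof (rule tm_eq)
  have "(p + 2) * (p + 2 - 1) = p * (p + 1) + 2 * p + 2" by (simp add: algebra_simps)
  thus "p * (p + 1) + 2 * q \<le> (p + 2) * (p + 2 - 1)" using assms by simp
  show "(p + 2 - 1) * (p + 2 - 2) < p * (p + 1) + 2 * q" using assms by (simp add: algebra_simps)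
qed simp

lemma mainT:
  "q \<le> p \<Longrightarrow> n \<ge> p + 1 \<Longrightarrow> (n = p + 1 \<longrightarrow> q = 0) \<Longrightarrow>
   T n (p * (p + 1) + 2 * q) = L n p q"
proof (induction n arbitrary: p q rule: less_induct)
  case (less n)
  define s where "s = p * (p + 1) + 2 * q"
  show ?case
  proof (cases "s = 0")
    case True
    hence "p = 0" "q = 0" unfolding s_def by auto
    have "T n s = replicate n 0" using less.prems by (subst T.simps) (simp add: True)
    also have "\<dots> = L n p q"
    proof (cases "n \<ge> 2")
      case True
      then obtain k where "n = Suc (Suc k)" by (metis add_2_eq_Suc le_Suc_ex)
      then show ?thesis using \<open>p = 0\<close> \<open>q = 0\<close> by (simp add: L_def)
    next
      case False
      hence "n = 1" using less.prems by auto
      then show ?thesis using \<open>p = 0\<close> \<open>q = 0\<close> by (simp add: L_def)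
    qed
    finally show ?thesis unfolding s_def .
  next
    case False
    define m where "m = p + 1 + (if q = 0 then 0 else 1)"
    have pge: "p \<ge> 1" using False less.prems(1) unfolding s_def by auto
    have tms: "tm s = m" unfolding s_def m_def
      using tmq0[OF pge] tmq[of q p] less.prems(1) by auto
    have nm: "n \<ge> m" using less.prems unfolding m_def by auto
    have Tm: "T m s = L m p q"
    proof (cases "q = 0")
      case True
      hence m: "m = p + 1" by (simp add: m_def)
      have s2: "s - 2 * (m - 1) = (p - 1) * (p - 1 + 1) + 2 * 0"
        using True pge unfolding s_def m by (cases p) (auto simp: algebra_simps)
      have IH: "T (m - 1) (s - 2 * (m - 1)) = L p (p - 1) 0"
      proof -
        have "m - 1 < n" using nm pge m by auto
        from less.IH[OF this, of 0 "p - 1"] have "T (m - 1) ((p - 1) * (p - 1 + 1) + 2 * 0) = L (m - 1) (p - 1) 0"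
          using pge m by simp
        thus ?thesis unfolding s2 using m by simp
      qed
      show ?thesis
        apply (subst T.simps)
        using False pge tms m True IH
        by (auto simp: L_def map_replicate simp del: replicate_Suc
            intro!: replicate_Suc[symmetric])
    next
      case qF: False
      hence m: "m = p + 2" by (simp add: m_def)
      have s2: "s - 2 * (m - 1) = (p - 1) * (p - 1 + 1) + 2 * (q - 1)"
        using qF pge unfolding s_def m by (cases p) (auto simp: algebra_simps)
      have IH: "T (m - 1) (s - 2 * (m - 1)) = L (p + 1) (p - 1) (q - 1)"
      proof -
        have "m - 1 < n" using nm pge m by auto
        from less.IH[OF this, of "q - 1" "p - 1"] have "T (m - 1) ((p - 1) * (p - 1 + 1) + 2 * (q - 1)) = L (m - 1) (p - 1) (q - 1)"
          using pge m less.prems qF by simp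
        thus ?thesis unfolding s2 using m by simp
      qed
      have e1: "replicate q (p + 1) = (p+1) # replicate (q - 1) (p + 1)"
        using qF by (cases q) auto
      have e2: "p + 1 - q = p - 1 + 1 - (q - 1)" using qF less.prems(1) by auto
      obtain q' where q': "q = Suc q'" using qF by (cases q) auto
      obtain p' where p': "p = Suc p'" using pge by (cases p) auto
      have "T m s = (m - 1) # map (\<lambda>x. x + 1) (T (m - 1) (s - 2 * (m - 1)))"
        using False tms m by (subst T.simps) simp
      then show ?thesis
        using IH m q' p' less.prems(1) by (simp add: L_def map_replicate Suc_diff_le)
    qed
    show ?thesis
    proof (cases "n = m")
      case True
      then show ?thesis using Tm s_def by simp
    next
      case nF: False
      hence "n > m" using nm by simp
      hence "T n s = T m s @ replicate (n - m) 0"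
        using False tms less.prems by (subst T.simps) auto
      also have "\<dots> = L n p q"
      proof (cases "q = 0")
        case True
        hence m: "m = p + 1" by (simp add: m_def)
        have "n - m = Suc (n - p - 2)" using \<open>n > m\<close> m by auto
        then show ?thesis using Tm m True \<open>n > m\<close> by (simp add: L_def)
      next
        case False
        hence m: "m = p + 2" by (simp add: m_def)
        have "n - p - 2 = (n - m) + 0" using m by simp
        then show ?thesis using Tm m False \<open>n > m\<close>
          by (simp add: L_def replicate_add[symmetric])
      qed
      finally show ?thesis unfolding s_def .
    qed
  qed
qed



lemma floor_part:
  fixes s :: nat and p :: int
  assumes "p = \<lfloor>(sqrt (4 * real s + 1) - 1) / 2\<rfloor>"
  shows "0 \<le> p \<and> nat p * (nat p + 1) \<le> s \<and> s < (nat p + 1) * (nat p + 2)"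
proof -
  define r where "r = sqrt (4 * real s + 1)"
  have r1: "r \<ge> 1" unfolding r_def by simp
  have r0: "r \<ge> 0" using r1 by simp
  have rsq: "r * r = 4 * real s + 1" unfolding r_def by (simp add: real_sqrt_mult[symmetric])
  have p0: "0 \<le> p" unfolding assms r_def[symmetric] using r1 by simp
  define P where "P = nat p"
  have pP: "real P = of_int p" using p0 unfolding P_def by simp
  have lo: "real P \<le> (r - 1) / 2" using pP unfolding assms r_def[symmetric]
    by (metis of_int_floor_le)
  have hi: "(r - 1) / 2 < real P + 1" using pP unfolding assms r_def[symmetric]
    by (metis floor_correct of_int_1 of_int_add)
  have a: "2 * real P + 1 \<le> r" using lo by simp
  have b: "r < 2 * real P + 3" using hi by simp
  have "(2 * real P + 1) * (2 * real P + 1) \<le> r * r"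
    using a by (intro mult_mono) auto
  hence "real (P * (P + 1)) \<le> real s" using rsq by (simp add: algebra_simps)
  hence c: "P * (P + 1) \<le> s" by linarith
  have "r * r < (2 * real P + 3) * (2 * real P + 3)"
    using b r0 by (intro mult_strict_mono) auto
  hence "real s < real ((P + 1) * (P + 2))" using rsq by (simp add: algebra_simps)
  hence d: "s < (P + 1) * (P + 2)" by linarith
  show ?thesis using p0 c d unfolding P_def by simp
qed

theorem theorem4:
  fixes n s :: nat and p :: int and q :: real
  assumes "n \<ge> 1" and "even s" and "s \<le> n * (n - 1)"
    and "p = \<lfloor>(sqrt (4 * real s + 1) - 1) / 2\<rfloor>"
    and "q = (real s - of_int p * (of_int p + 1)) / 2"
  shows "\<exists>k::nat. q = real k \<and> 0 \<le> p \<and> int k \<le> p \<and>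
           T n s = replicate k (nat p + 1) @ replicate (nat p + 1 - k) (nat p)
                   @ (if n \<ge> nat p + 2 then [k] @ replicate (n - nat p - 2) 0 else [])
           \<and> (n = nat p + 1 \<longrightarrow> k = 0)"
proof -
  define P where "P = nat p"
  have fp: "0 \<le> p" "P * (P + 1) \<le> s" "s < (P + 1) * (P + 2)"
    using floor_part[OF assms(4)] unfolding P_def by auto
  have ev: "even (P * (P + 1))" by simp
  have "even (s - P * (P + 1))" using assms(2) ev fp(2) by simp
  then obtain k where k: "s - P * (P + 1) = 2 * k" by (rule evenE)
  have s: "s = P * (P + 1) + 2 * k" using k fp(2) by simp
  have kP: "k \<le> P" using fp(3) s by (simp add: algebra_simps)
  have nP: "n \<ge> P + 1"
  proof (rule ccontr)
    assume "\<not> n \<ge> P + 1"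
    hence "n \<le> P" by simp
    hence "n * (n - 1) \<le> P * (P - 1)" by (rule jmono)
    moreover have "P * (P - 1) < P * (P + 1)" using \<open>n \<le> P\<close> assms(1)
      by (intro mult_strict_left_mono) auto
    ultimately show False using assms(3) fp(2) by simp
  qed
  have nk: "n = P + 1 \<longrightarrow> k = 0"
  proof
    assume "n = P + 1"
    hence "s \<le> P * (P + 1)" using assms(3) by (simp add: mult.commute)
    thus "k = 0" using s by simp
  qed
  have T: "T n s = L n P k" using mainT[OF kP nP nk] s by simp
  have pP: "of_int p = real P" using fp(1) unfolding P_def by simp
  have q: "q = real k" using assms(5) s unfolding pP by (simp add: algebra_simps)
  show ?thesis
    apply (rule exI[of _ k])
    using q fp(1) kP T nk unfolding P_def L_def by auto
qed

end
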